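(* In the setting described in the context, assume $G$ satisfies Condition 1. Then for every $r\ge0$, at least $\max\{sp(\mathbf{A}),f+1\}$ columns of $\Phi(r+\nu-1,r)$ are lower bounded component-wise by $\beta^{\nu}\mathbf{1}$, where $\mathbf{1}\in\mathbb{R}^{n-\phi}$ is the all-ones column vector.
   Context: A synchronous system of $n$ agents communicates over a directed graph $G=(\mathcal{V},\mathcal{E})$, $\mathcal{V}=\{1,\dots,n\}$, without self-loops; $N_i^-=\{j:(j,i)\in\mathcal{E}\}$. At most $f$ agents are Byzantine faulty (may send arbitrary, possibly inconsistent values); $\mathcal{F}$ is the set of faulty agents, $\phi=|\mathcal{F}|\le f$, and the non-faulty agents are indexed $1,\dots,n-\phi$. An assignment matrix $\mathbf{A}\in\mathbb{R}^{k\times n}$ has nonnegative entries and columns summing to $1$; agent $i$ holds $g_i=\sum_{j=1}^k\mathbf{A}_{ji}h_j$ for admissible (convex, $L$-Lipschitz, nonempty compact argmin) $h_1,\dots,h_k:\mathbb{R}\to\mathbb{R}$. Sparsity parameter $sp(\mathbf{A})$: smallest $s$ such that the sum of any $s$ columns of $\mathbf{A}$ is component-wise positive ($n+1$ if the sum of all columns is not). Reduced graph w.r.t. $\mathcal{F}$: subgraph of $G$ obtained by removing the nodes of $\mathcal{F}$ with their edges and then removing up to $f$ additional incoming edges at each remaining node; $R_{\mathcal{F}}$ is the (finite) set of all reduced graphs and $\tau=|R_{\mathcal{F}}|$. A source component of a graph is the set of its nodes each having a directed path to every other node of the graph. Condition 1: for every $\mathcal{F}'\subseteq\mathcal{V}$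 with $|\mathcal{F}'|\le f$, every reduced graph w.r.t. $\mathcal{F}'$ has a source component with at least $\max\{f+1,sp(\mathbf{A})\}$ nodes. Algorithm 2 (run by non-faulty agents, step sizes $\alpha(t)$): arbitrary $x_i(0)$; in iteration $t\ge1$ agent $i$ sends $x_i(t-1)$ to all out-neighbors, receives a multiset of $|N_i^-|$ values (a default value replacing any missing message), discards the $f$ smallest and $f$ largest values (ties broken arbitrarily), lets $N_i^*(t)$ be the senders of the remaining values with $w_j$ the value from $j$, sets $w_i=x_i(t-1)$, and updates $x_i(t)=\frac{1}{|N_i^*(t)|+1}\sum_{j\in\{i\}\cup N_i^*(t)}w_j-\alpha(t-1)d_i(t-1)$, with $d_i(t-1)$ a (sub)gradient of $g_i$ at $x_i(t-1)$. Known matrix representation: with $\mathbf{x}(t)\in\mathbb{R}^{n-\phi}$ the vector of non-faulty states and $\mathbf{d}(t)$ the vector of the $d_i(t)$, one has $\mathbf{x}(t+1)=\mathbf{M}(t)\mathbf{x}(t)-\alpha(t)\mathbf{d}(t)$ for row-stochastic $(n-\phi)\times(n-\phi)$ matrices $\mathbf{M}(t)$ (depending on the execution), and there is a constant $0<\beta<1$ such that for every $t$ there is a reduced graph $\mathcal{H}(t)\in R_{\mathcal{F}}$ whose adjacency matrix $\mathbf{H}(t)$ (with $\mathbf{H}_{ij}(t)=1$ if $i=j$ or $(j,i)$ is an edge of $\mathcal{H}(t)$, and $0$ otherwise) satisfies $\mathbf{M}(t)\ge\beta\mathbf{H}(t)$ entrywise. Define $\Phi(t,r)=\mathbf{M}(t)\mathbf{M}(t-1)\cdots\mathbf{M}(r)$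 for $t\ge r$, and $\nu=\tau(n-\phi)$. *)

theory Defs
  imports Complex_Main
begin

text \<open>A directed graph is given by its edge set E :: (nat \<times> nat) set,
  where (j,i) \<in> E means an edge from j to i. Matrices are functions nat \<Rightarrow> nat \<Rightarrow> real;
  the (n-phi)x(n-phi) matrices on the non-faulty agents are indexed directly by the set
  NF = {1..n} - F of non-faulty agents (a relabelling of 1..n-phi).\<close>

definition agents :: "nat \<Rightarrow> nat set" where
  "agents n = {1..n}"

definition digraph :: "nat \<Rightarrow> (nat \<times> nat) set \<Rightarrow> bool" where
  "digraph n E \<longleftrightarrow> E \<subseteq> agents n \<times> agents n \<and> (\<forall>i. (i, i) \<notin> E)"

definition assignment_matrix :: "nat \<Rightarrow> nat \<Rightarrow> (nat \<Rightarrow> nat \<Rightarrow> real) \<Rightarrow> bool" where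
  "assignment_matrix k n A \<longleftrightarrow>
     (\<forall>j\<in>{1..k}. \<forall>i\<in>{1..n}. A j i \<ge> 0) \<and> (\<forall>i\<in>{1..n}. (\<Sum>j\<in>{1..k}. A j i) = 1)"

definition sp :: "nat \<Rightarrow> nat \<Rightarrow> (nat \<Rightarrow> nat \<Rightarrow> real) \<Rightarrow> nat" where
  "sp k n A = (if (\<forall>j\<in>{1..k}. (\<Sum>i\<in>{1..n}. A j i) > 0)
      then (LEAST s. \<forall>S. S \<subseteq> {1..n} \<and> card S = s \<longrightarrow> (\<forall>j\<in>{1..k}. (\<Sum>i\<in>S. A j i) > 0))
      else n + 1)"

text \<open>A reduced graph is
  represented by its edge set (its node set is always agents n - F).\<close>
definition reduced_graph :: "nat \<Rightarrow> (nat \<times> nat) set \<Rightarrow> nat \<Rightarrow> nat set \<Rightarrow> (nat \<times> nat) set \<Rightarrow> bool" where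
  "reduced_graph n E f F H \<longleftrightarrow>
     H \<subseteq> {(j, i) \<in> E. j \<notin> F \<and> i \<notin> F} \<and>
     (\<forall>i \<in> agents n - F. card ({j. (j, i) \<in> E \<and> j \<notin> F} - {j. (j, i) \<in> H}) \<le> f)"

definition reduced_graphs :: "nat \<Rightarrow> (nat \<times> nat) set \<Rightarrow> nat \<Rightarrow> nat set \<Rightarrow> (nat \<times> nat) set set" where
  "reduced_graphs n E f F = {H. reduced_graph n E f F H}"

definition source_component :: "nat set \<Rightarrow> (nat \<times> nat) set \<Rightarrow> nat set" where
  "source_component W H = {s \<in> W. \<forall>v \<in> W. (s, v) \<in> H\<^sup>*}"

definition condition1 :: "nat \<Rightarrow> (nat \<times> nat) set \<Rightarrow> nat \<Rightarrow> nat \<Rightarrow> (nat \<Rightarrow> nat \<Rightarrow> real) \<Rightarrow> bool" where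
  "condition1 n E f k A \<longleftrightarrow>
     (\<forall>F'. F' \<subseteq> agents n \<and> card F' \<le> f \<longrightarrow>
        (\<forall>H \<in> reduced_graphs n E f F'.
           card (source_component (agents n - F') H) \<ge> max (f + 1) (sp k n A)))"

definition adj :: "(nat \<times> nat) set \<Rightarrow> nat \<Rightarrow> nat \<Rightarrow> real" where
  "adj H i j = (if i = j \<or> (j, i) \<in> H then 1 else 0)"

definition row_stochastic :: "nat set \<Rightarrow> (nat \<Rightarrow> nat \<Rightarrow> real) \<Rightarrow> bool" where
  "row_stochastic N P \<longleftrightarrow> (\<forall>i\<in>N. (\<forall>j\<in>N. P i j \<ge> 0) \<and> (\<Sum>j\<in>N. P i j) = 1)"

fun mprod :: "(nat \<Rightarrow> nat \<Rightarrow> nat \<Rightarrow> real) \<Rightarrow> nat set \<Rightarrow> nat \<Rightarrow> nat \<Rightarrow> nat \<Rightarrow> nat \<Rightarrow> real" where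
  "mprod M N r 0 = M r"
| "mprod M N r (Suc m) = (\<lambda>i j. \<Sum>l\<in>N. M (r + Suc m) i l * mprod M N r m l j)"

definition Phi :: "(nat \<Rightarrow> nat \<Rightarrow> nat \<Rightarrow> real) \<Rightarrow> nat set \<Rightarrow> nat \<Rightarrow> nat \<Rightarrow> nat \<Rightarrow> nat \<Rightarrow> real" where
  "Phi M N t r = mprod M N r (t - r)"

end

theory Submission
  imports Defs "HOL-Library.Transitive_Closure_Table"
begin

lemma path_relpow: "rtrancl_path (\<lambda>a b. (a,b)\<in>R) x xs y \<Longrightarrow> (x,y) \<in> R^^(length xs)"
  by (induction rule: rtrancl_path.induct) (simp_all add: relpow_Suc_I2 relpow_0_I del: relpow.simps)

lemma path_set: "rtrancl_path (\<lambda>a b. (a,b)\<in>R) x xs y \<Longrightarrow> R \<subseteq> V \<times> V \<Longrightarrow> set xs \<subseteq> V"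
  by (induction rule: rtrancl_path.induct) auto

lemma short_path:
  assumes "(x,y) \<in> R\<^sup>*" "R \<subseteq> V \<times> V" "finite V" "x \<in> V"
  shows "\<exists>d. d < card V \<and> (x,y) \<in> R^^d"
proof -
  have "(\<lambda>a b. (a,b)\<in>R)\<^sup>*\<^sup>* x y" using assms(1) by (simp add: rtrancl_def)
  then obtain xs where "rtrancl_path (\<lambda>a b. (a,b)\<in>R) x xs y"
    by (auto simp: rtranclp_eq_rtrancl_path)
  then obtain xs' where p: "rtrancl_path (\<lambda>a b. (a,b)\<in>R) x xs' y" and d: "distinct (x # xs')"
    by (rule rtrancl_path_distinct)
  have "set (x # xs') \<subseteq> V" using path_set[OF p assms(2)] assms(4) by auto
  hence "length (x # xs') \<le> card V" using d assms(3)
    by (metis card_mono distinct_card)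
  thus ?thesis using path_relpow[OF p] by (intro exI[of _ "length xs'"]) auto
qed

lemma relpow_in: "(j,i) \<in> H^^d \<Longrightarrow> H \<subseteq> N \<times> N \<Longrightarrow> j \<in> N \<Longrightarrow> i \<in> N"
  by (induction d arbitrary: i) auto

lemma mprod_nonneg:
  assumes "finite N" "\<And>t i j. i \<in> N \<Longrightarrow> j \<in> N \<Longrightarrow> M t i j \<ge> 0"
  shows "i \<in> N \<Longrightarrow> j \<in> N \<Longrightarrow> mprod M N r m i j \<ge> 0"
  using assms by (induction m arbitrary: i) (auto intro!: sum_nonneg)

lemma core:
  fixes \<beta> :: real
  assumes fin: "finite N" and nonneg: "\<And>t i j. i \<in> N \<Longrightarrow> j \<in> N \<Longrightarrow> M t i j \<ge> 0"
    and b: "0 < \<beta>" "\<beta> \<le> 1"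
    and low: "\<And>t i j. i \<in> N \<Longrightarrow> j \<in> N \<Longrightarrow> M t i j \<ge> \<beta> * adj (Hs t) i j"
    and HN: "H \<subseteq> N \<times> N" and jN: "j \<in> N"
  shows "\<forall>d i. (j,i) \<in> H^^d \<longrightarrow> d \<le> (\<Sum>s\<in>{..m}. if Hs (r+s) = H then 1 else 0::nat)
            \<longrightarrow> \<beta>^(Suc m) \<le> mprod M N r m i j"
proof (induction m)
  case 0
  show ?case
  proof (intro allI impI)
    fix d i assume p: "(j,i) \<in> H^^d" and dl: "d \<le> (\<Sum>s\<in>{..0::nat}. if Hs (r+s) = H then 1 else 0::nat)"
    have "d = 0 \<or> (d = 1 \<and> Hs r = H)" using dl by (auto split: if_splits)
    then show "\<beta>^(Suc 0) \<le> mprod M N r 0 i j"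
    proof
      assume "d = 0" then have "i = j" using p by simp
      then show ?thesis using low[OF jN jN, of r] by (simp add: adj_def)
    next
      assume "d = 1 \<and> Hs r = H"
      then have "(j,i) \<in> H" "Hs r = H" using p by auto
      then show ?thesis using low[of i j r] HN by (auto simp: adj_def)
    qed
  qed
next
  case (Suc m)
  let ?c = "\<lambda>m. (\<Sum>s\<in>{..m}. if Hs (r+s) = H then 1 else 0::nat)"
  show ?case
  proof (intro allI impI)
    fix d i assume p: "(j,i) \<in> H^^d" and dl: "d \<le> ?c (Suc m)"
    have iN: "i \<in> N" using relpow_in[OF p HN jN] .
    have terms: "\<And>l. l \<in> N \<Longrightarrow> 0 \<le> M (r + Suc m) i l * mprod M N r m l j"
      using nonneg mprod_nonneg[OF fin nonneg] iN jN by (simp add: mult_nonneg_nonneg)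
    have key: "\<exists>l\<in>N. \<beta> \<le> M (r + Suc m) i l \<and> \<beta>^(Suc m) \<le> mprod M N r m l j"
    proof (cases "d \<le> ?c m")
      case True
      have "\<beta> \<le> M (r + Suc m) i i" using low[OF iN iN, of "r + Suc m"] by (simp add: adj_def)
      then show ?thesis using Suc.IH p True iN by blast
    next
      case False
      have cS: "?c (Suc m) = ?c m + (if Hs (r + Suc m) = H then 1 else 0)" by simp
      with False dl have hs: "Hs (r + Suc m) = H" and dd: "d = Suc (?c m)"
        by (auto split: if_splits)
      from p dd obtain l where pl: "(j,l) \<in> H^^(?c m)" and e: "(l,i) \<in> H" by auto
      have lN: "l \<in> N" using e HN by auto
      have "\<beta> \<le> M (r + Suc m) i l" using low[OF iN lN, of "r + Suc m"] hs e by (simp add: adj_def)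
      then show ?thesis using Suc.IH pl lN by blast
    qed
    then obtain l where lN: "l \<in> N" and l1: "\<beta> \<le> M (r + Suc m) i l"
      and l2: "\<beta>^(Suc m) \<le> mprod M N r m l j" by blast
    have "\<beta>^(Suc (Suc m)) = \<beta> * \<beta>^(Suc m)" by simp
    also have "\<dots> \<le> M (r + Suc m) i l * mprod M N r m l j"
      using l1 l2 b by (intro mult_mono) auto
    also have "\<dots> \<le> (\<Sum>l'\<in>N. M (r + Suc m) i l' * mprod M N r m l' j)"
      by (rule member_le_sum[OF lN]) (use terms fin in auto)
    finally show "\<beta>^(Suc (Suc m)) \<le> mprod M N r (Suc m) i j" by simp
  qed
qed


theorem lemma2:
  fixes n f k :: nat and E :: "(nat \<times> nat) set" and A :: "nat \<Rightarrow> nat \<Rightarrow> real"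
    and F :: "nat set" and M :: "nat \<Rightarrow> nat \<Rightarrow> nat \<Rightarrow> real" and \<beta> :: real
  assumes G: "digraph n E"
    and A: "assignment_matrix k n A"
    and cond1: "condition1 n E f k A"
    and F: "F \<subseteq> agents n" "card F \<le> f"
    and stoch: "\<And>t. row_stochastic (agents n - F) (M t)"
    and beta: "0 < \<beta>" "\<beta> < 1"
    and lower: "\<And>t. \<exists>H \<in> reduced_graphs n E f F.
                  \<forall>i \<in> agents n - F. \<forall>j \<in> agents n - F. M t i j \<ge> \<beta> * adj H i j"
  shows "\<forall>r::nat. \<exists>C \<subseteq> agents n - F.
           card C \<ge> max (sp k n A) (f + 1) \<and>
           (\<forall>j \<in> C. \<forall>i \<in> agents n - F.
              Phi M (agents n - F)
                  (r + card (reduced_graphs n E f F) * (n - card F) - 1) r i j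
              \<ge> \<beta> ^ (card (reduced_graphs n E f F) * (n - card F)))"
proof
  fix r :: nat
  define N where "N = agents n - F"
  define RG where "RG = reduced_graphs n E f F"
  define Hs where "Hs t = (SOME H. H \<in> RG \<and> (\<forall>i \<in> N. \<forall>j \<in> N. M t i j \<ge> \<beta> * adj H i j))" for t
  have Hs: "Hs t \<in> RG \<and> (\<forall>i \<in> N. \<forall>j \<in> N. M t i j \<ge> \<beta> * adj (Hs t) i j)" for t
    unfolding Hs_def using lower[of t] unfolding N_def RG_def by (intro someI_ex[where P="\<lambda>H. H \<in> reduced_graphs n E f F \<and> (\<forall>i \<in> agents n - F. \<forall>j \<in> agents n - F. M t i j \<ge> \<beta> * adj H i j)"]) blast
  have finN: "finite N" unfolding N_def agents_def by simp
  have Efin: "finite E" using G unfolding digraph_def agents_def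
    by (meson finite_SigmaI finite_atLeastAtMost finite_subset)
  have RGsub: "RG \<subseteq> Pow E" unfolding RG_def reduced_graphs_def reduced_graph_def by auto
  have finRG: "finite RG" using RGsub Efin by (meson finite_Pow_iff finite_subset)
  have HN: "H \<subseteq> N \<times> N" if "H \<in> RG" for H
    using that G unfolding RG_def reduced_graphs_def reduced_graph_def digraph_def N_def by auto
  have srcC: "card (source_component N H) \<ge> max (f + 1) (sp k n A)" if "H \<in> RG" for H
    using cond1 F that unfolding condition1_def N_def RG_def by blast
  have srcsub: "source_component N H \<subseteq> N" for H unfolding source_component_def by auto
  have cardN: "card N = n - card F" unfolding N_def using F(1)
    by (simp add: card_Diff_subset agents_def finite_subset)
  have "card (source_component N (Hs 0)) \<ge> 1" using srcC[OF conjunct1[OF Hs[of 0]]] by linarith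
  hence cN1: "card N \<ge> 1" using card_mono[OF finN srcsub] by (meson order_trans)
  have tau1: "card RG \<ge> 1" using Hs[of 0] finRG by (metis One_nat_def Suc_leI card_gt_0_iff empty_iff)
  define \<nu> where "\<nu> = card RG * card N"
  have nu1: "\<nu> \<ge> 1" unfolding \<nu>_def using cN1 tau1 by simp
  define m where "m = \<nu> - 1"
  define cnt where "cnt H = (\<Sum>s\<in>{..m}. if Hs (r+s) = H then 1 else 0::nat)" for H
  have sumcnt: "(\<Sum>H\<in>RG. cnt H) = \<nu>"
  proof -
    have "(\<Sum>H\<in>RG. cnt H) = (\<Sum>s\<in>{..m}. \<Sum>H\<in>RG. if Hs (r+s) = H then 1 else 0::nat)"
      unfolding cnt_def by (rule sum.swap)
    also have "\<dots> = (\<Sum>s\<in>{..m}. 1)"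
      using finRG Hs by (intro sum.cong) (auto simp: sum.delta)
    also have "\<dots> = \<nu>" unfolding m_def using nu1 by simp
    finally show ?thesis .
  qed
  have "\<exists>H\<in>RG. cnt H \<ge> card N"
  proof (rule ccontr)
    assume "\<not> ?thesis"
    hence "\<forall>H\<in>RG. cnt H \<le> card N - 1" by auto
    hence "(\<Sum>H\<in>RG. cnt H) \<le> (\<Sum>H\<in>RG. card N - 1)" by (intro sum_mono) auto
    also have "\<dots> = card RG * (card N - 1)" by simp
    also have "\<dots> < \<nu>" unfolding \<nu>_def using tau1 cN1
      by (simp add: diff_mult_distrib2)
    finally show False using sumcnt by simp
  qed
  then obtain H where HRG: "H \<in> RG" and cntH: "cnt H \<ge> card N" by blast
  define C where "C = source_component N H"
  have nonneg: "\<And>t i j. i \<in> N \<Longrightarrow> j \<in> N \<Longrightarrow> M t i j \<ge> 0"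
    using stoch unfolding row_stochastic_def N_def by blast
  have low: "\<And>t i j. i \<in> N \<Longrightarrow> j \<in> N \<Longrightarrow> M t i j \<ge> \<beta> * adj (Hs t) i j"
    using Hs by blast
  have bound: "\<beta>^\<nu> \<le> mprod M N r m i j" if jC: "j \<in> C" and iN: "i \<in> N" for i j
  proof -
    have jN: "j \<in> N" using jC srcsub unfolding C_def by auto
    have "(j,i) \<in> H\<^sup>*" using jC iN unfolding C_def source_component_def by auto
    then obtain d where d: "d < card N" "(j,i) \<in> H^^d"
      using short_path[OF _ HN[OF HRG] finN jN] by blast
    have "\<beta>^(Suc m) \<le> mprod M N r m i j"
      using core[OF finN nonneg _ _ low HN[OF HRG] jN, where m=m and r=r] beta d cntH
      unfolding cnt_def by fastforce
    thus ?thesis unfolding m_def using nu1 by simp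
  qed
  show "\<exists>C \<subseteq> agents n - F.
           card C \<ge> max (sp k n A) (f + 1) \<and>
           (\<forall>j \<in> C. \<forall>i \<in> agents n - F.
              Phi M (agents n - F)
                  (r + card (reduced_graphs n E f F) * (n - card F) - 1) r i j
              \<ge> \<beta> ^ (card (reduced_graphs n E f F) * (n - card F)))"
  proof (intro exI[of _ C] conjI ballI)
    show "C \<subseteq> agents n - F" using srcsub unfolding C_def N_def by auto
    show "card C \<ge> max (sp k n A) (f + 1)" using srcC[OF HRG] unfolding C_def by (simp add: max.commute)
  next
    fix j i assume "j \<in> C" "i \<in> agents n - F"
    moreover have "r + card (reduced_graphs n E f F) * (n - card F) - 1 - r = m"
      unfolding m_def \<nu>_def RG_def[symmetric] cardN[symmetric] using nu1 unfolding \<nu>_def by simp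
    ultimately show "Phi M (agents n - F)
                  (r + card (reduced_graphs n E f F) * (n - card F) - 1) r i j
              \<ge> \<beta> ^ (card (reduced_graphs n E f F) * (n - card F))"
      using bound unfolding Phi_def N_def[symmetric] RG_def[symmetric] cardN[symmetric] \<nu>_def[symmetric]
      by simp
  qed
qed

end
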